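(* Let $q\ge 2$, $\eta\ge 1$, $u\ge 1$ and $n\ge 1$ be integers, and let $\mathcal{C}\subseteq\{0,1,\dots,q-1\}^n$ be a code consisting of $N\ge u+1$ distinct codewords. Then $\mathcal{C}$ is a $[q;Q;\eta;u]$-SQ-disjunct code if and only if no codeword is included in a set of $u$ other codewords; that is, if and only if for every $\mathbf{x}\in\mathcal{C}$ and every set $\mathcal{Z}\subseteq\mathcal{C}\setminus\{\mathbf{x}\}$ with $|\mathcal{Z}|=u$, it is not the case that $\{\mathbf{x}\}\lhd\mathcal{Z}$.
   Context: Semi-quantitative group testing with equidistant thresholds: $\eta$ is a positive integer (the threshold spacing). For $s\ge 1$ vectors $\mathbf{x}_1,\dots,\mathbf{x}_s\in\{0,\dots,q-1\}^n$, their SQ-sum (syndrome) is the vector $\mathbf{y}=\mathbf{x}_1\circledast\cdots\circledast\mathbf{x}_s$ of length $n$ with $i$-th coordinate $y_i=\left\lfloor\frac{x_{i,1}+\cdots+x_{i,s}}{\eta}\right\rfloor$ (ordinary integer addition), where $x_{i,j}$ is the $i$-th coordinate of $\mathbf{x}_j$. A set of codewords $\mathcal{X}$ with syndrome $\mathbf{y}_{\mathcal{X}}$ is included in a set of codewords $\mathcal{Z}$ with syndrome $\mathbf{y}_{\mathcal{Z}}$, written $\mathcal{X}\lhd\mathcal{Z}$, if $(\mathbf{y}_{\mathcal{X}})_i\le(\mathbf{y}_{\mathcal{Z}})_i$ for all $i=1,\dots,n$. A code $\mathcal{C}$ of length $n$ is a $[q;Q;\eta;u]$-SQ-disjunct code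 if for all $1\le s,t\le u$ and all sets $\mathcal{X}=\{\mathbf{x}_1,\dots,\mathbf{x}_s\}\subseteq\mathcal{C}$, $\mathcal{Z}=\{\mathbf{z}_1,\dots,\mathbf{z}_t\}\subseteq\mathcal{C}$ of codewords, $\mathcal{X}\lhd\mathcal{Z}$ implies $\mathcal{X}\subseteq\mathcal{Z}$. (Here $Q$ denotes the number of possible test outcomes and is assumed large enough that no outcome saturates; it plays no further role.) *)

theory Defs
  imports Main
begin

text \<open>Words of length n over the alphabet {0,...,q-1}, represented as functions
  nat => nat that are zero outside the index range {0..<n}.\<close>
definition words :: "nat \<Rightarrow> nat \<Rightarrow> (nat \<Rightarrow> nat) set" where
  "words q n = {x. (\<forall>i<n. x i < q) \<and> (\<forall>i\<ge>n. x i = 0)}"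

definition sq_syndrome :: "nat \<Rightarrow> (nat \<Rightarrow> nat) set \<Rightarrow> nat \<Rightarrow> nat" where
  "sq_syndrome \<eta> X i = (\<Sum>x\<in>X. x i) div \<eta>"

definition sq_included :: "nat \<Rightarrow> nat \<Rightarrow> (nat \<Rightarrow> nat) set \<Rightarrow> (nat \<Rightarrow> nat) set \<Rightarrow> bool" where
  "sq_included n \<eta> X Z \<longleftrightarrow> (\<forall>i<n. sq_syndrome \<eta> X i \<le> sq_syndrome \<eta> Z i)"

text \<open>[q;Q;eta;u]-SQ-disjunct code (Q plays no role).\<close>
definition sq_disjunct :: "nat \<Rightarrow> nat \<Rightarrow> nat \<Rightarrow> (nat \<Rightarrow> nat) set \<Rightarrow> bool" where
  "sq_disjunct n \<eta> u C \<longleftrightarrow>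
     (\<forall>X Z. X \<subseteq> C \<longrightarrow> Z \<subseteq> C \<longrightarrow>
        1 \<le> card X \<longrightarrow> card X \<le> u \<longrightarrow> 1 \<le> card Z \<longrightarrow> card Z \<le> u \<longrightarrow>
        sq_included n \<eta> X Z \<longrightarrow> X \<subseteq> Z)"

end

theory Submission
  imports Defs
begin

lemma extend_subset:
  assumes "finite B" "A \<subseteq> B" "card A \<le> k" "k \<le> card B"
  shows "\<exists>A'. A \<subseteq> A' \<and> A' \<subseteq> B \<and> card A' = k"
proof -
  have fA: "finite A" using assms finite_subset by blast
  have "k - card A \<le> card (B - A)" using assms fA by (simp add: card_Diff_subset)
  then obtain D where D: "D \<subseteq> B - A" "card D = k - card A"
    by (meson obtain_subset_with_card_n)
  have fD: "finite D" using D assms finite_subset by (meson finite_Diff)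
  have "card (A \<union> D) = card A + card D"
    using D fA fD by (intro card_Un_disjoint) auto
  then show ?thesis using D assms by (intro exI[of _ "A \<union> D"]) auto
qed

lemma syn_mono:
  assumes "finite B" "A \<subseteq> B"
  shows "sq_syndrome \<eta> A i \<le> sq_syndrome \<eta> B i"
  unfolding sq_syndrome_def
  by (intro div_le_mono sum_mono2 assms) auto

theorem proposition1:
  fixes q \<eta> u n :: nat and C :: "(nat \<Rightarrow> nat) set"
  assumes "q \<ge> 2" and "\<eta> \<ge> 1" and "u \<ge> 1" and "n \<ge> 1"
    and "C \<subseteq> words q n" and "finite C" and "card C \<ge> u + 1"
  shows "sq_disjunct n \<eta> u C \<longleftrightarrow>
    (\<forall>x\<in>C. \<forall>Z. Z \<subseteq> C - {x} \<longrightarrow> card Z = u \<longrightarrow> \<not> sq_included n \<eta> {x} Z)"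
proof
  assume d: "sq_disjunct n \<eta> u C"
  show "\<forall>x\<in>C. \<forall>Z. Z \<subseteq> C - {x} \<longrightarrow> card Z = u \<longrightarrow> \<not> sq_included n \<eta> {x} Z"
  proof (intro ballI allI impI notI)
    fix x Z assume x: "x \<in> C" and Z: "Z \<subseteq> C - {x}" "card Z = u" and inc: "sq_included n \<eta> {x} Z"
    have "{x} \<subseteq> Z" using d[unfolded sq_disjunct_def, rule_format, of "{x}" Z] x Z inc assms by auto
    then show False using Z by auto
  qed
next
  assume h: "\<forall>x\<in>C. \<forall>Z. Z \<subseteq> C - {x} \<longrightarrow> card Z = u \<longrightarrow> \<not> sq_included n \<eta> {x} Z"
  show "sq_disjunct n \<eta> u C" unfolding sq_disjunct_def
  proof (intro allI impI subsetI, rule ccontr)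
    fix X Z x assume XC: "X \<subseteq> C" and ZC: "Z \<subseteq> C" and c1: "1 \<le> card X" "card X \<le> u"
      and c2: "1 \<le> card Z" "card Z \<le> u" and inc: "sq_included n \<eta> X Z" and xX: "x \<in> X" and xZ: "x \<notin> Z"
    have fC: "finite (C - {x})" using assms by simp
    have cc: "card (C - {x}) \<ge> u" proof - have "x \<in> C" using xX XC by blast then have "card (C - {x}) = card C - 1" using assms(6) by (simp add: card_Diff_singleton) then show ?thesis using assms(7) by simp qed
    obtain Z' where Z': "Z \<subseteq> Z'" "Z' \<subseteq> C - {x}" "card Z' = u"
      using extend_subset[OF fC, of Z u] ZC xZ c2 cc by blast
    have fX: "finite X" using XC assms finite_subset by blast
    have fZ': "finite Z'" using Z' fC finite_subset by blast
    have "sq_included n \<eta> {x} Z'" unfolding sq_included_def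
    proof (intro allI impI)
      fix i assume "i < n"
      have "sq_syndrome \<eta> {x} i \<le> sq_syndrome \<eta> X i" using syn_mono[OF fX] xX by blast
      also have "\<dots> \<le> sq_syndrome \<eta> Z i" using inc \<open>i < n\<close> unfolding sq_included_def by blast
      also have "\<dots> \<le> sq_syndrome \<eta> Z' i" using syn_mono[OF fZ' Z'(1)] .
      finally show "sq_syndrome \<eta> {x} i \<le> sq_syndrome \<eta> Z' i" .
    qed
    then show False using h xX XC Z' by blast
  qed
qed

end
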